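(* Let $T$ be a completely non-unitary contraction on a Hilbert space $\mathcal{H}$ with finite-dimensional defect spaces such that $\mathcal{D}_T\subseteq\mathcal{D}_{T^*}$ and $\dim\mathcal{D}_T=1$. Then $T$ is hyponormal.
   Context: For a contraction $T$ on $\mathcal{H}$, the defect spaces are $\mathcal{D}_T=\overline{(I-T^*T)^{1/2}\mathcal{H}}$ and $\mathcal{D}_{T^*}=\overline{(I-TT^* )^{1/2}\mathcal{H}}$. A contraction is completely non-unitary if it has no nonzero reducing subspace on which it is unitary. $T$ is hyponormal if $T^*T\ge TT^*$. *)

theory Defs
  imports "HOL-Analysis.Analysis"
begin

class complex_vector = real_vector +
  fixes scaleC :: "complex \<Rightarrow> 'a \<Rightarrow> 'a" (infixr "*\<^sub>C" 75)
  assumes scaleC_add_right: "scaleC a (x + y) = scaleC a x + scaleC a y"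
    and scaleC_add_left: "scaleC (a + b) x = scaleC a x + scaleC b x"
    and scaleC_scaleC: "scaleC a (scaleC b x) = scaleC (a * b) x"
    and scaleC_one: "scaleC 1 x = x"
    and scaleR_scaleC: "scaleR r x = scaleC (complex_of_real r) x"

text \<open>Inner product, linear in the second and conjugate-linear in the first argument.\<close>
class complex_inner = complex_vector + real_normed_vector +
  fixes cinner :: "'a \<Rightarrow> 'a \<Rightarrow> complex"
  assumes cinner_commute: "cinner x y = cnj (cinner y x)"
    and cinner_add_left: "cinner (x + y) z = cinner x z + cinner y z"
    and cinner_scaleC_left: "cinner (scaleC c x) y = cnj c * cinner x y"
    and cinner_nonneg: "Im (cinner x x) = 0 \<and> Re (cinner x x) \<ge> 0"
    and cinner_eq_zero_iff: "cinner x x = 0 \<longleftrightarrow> x = 0"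
    and norm_eq_sqrt_cinner: "norm x = sqrt (Re (cinner x x))"

class chilbert_space = complex_inner + complete_space

definition bounded_clinear :: "('a::complex_inner \<Rightarrow> 'b::complex_inner) \<Rightarrow> bool" where
  "bounded_clinear f \<longleftrightarrow> bounded_linear f \<and> (\<forall>c x. f (c *\<^sub>C x) = c *\<^sub>C f x)"

definition adj :: "('a::complex_inner \<Rightarrow> 'a) \<Rightarrow> ('a \<Rightarrow> 'a)" where
  "adj T = (THE S. \<forall>x y. cinner (S x) y = cinner x (T y))"

definition contraction :: "('a::complex_inner \<Rightarrow> 'a) \<Rightarrow> bool" where
  "contraction T \<longleftrightarrow> bounded_clinear T \<and> (\<forall>x. norm (T x) \<le> norm x)"

definition positive_op :: "('a::complex_inner \<Rightarrow> 'a) \<Rightarrow> bool" where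
  "positive_op A \<longleftrightarrow> bounded_clinear A \<and>
     (\<forall>x. Im (cinner x (A x)) = 0 \<and> Re (cinner x (A x)) \<ge> 0)"

definition op_le :: "('a::complex_inner \<Rightarrow> 'a) \<Rightarrow> ('a \<Rightarrow> 'a) \<Rightarrow> bool" where
  "op_le A B \<longleftrightarrow> positive_op (\<lambda>x. B x - A x)"

definition op_sqrt :: "('a::complex_inner \<Rightarrow> 'a) \<Rightarrow> ('a \<Rightarrow> 'a)" where
  "op_sqrt A = (THE S. positive_op S \<and> S \<circ> S = A)"

definition defect_space :: "('a::complex_inner \<Rightarrow> 'a) \<Rightarrow> 'a set" where
  "defect_space T = closure (range (op_sqrt (\<lambda>x. x - adj T (T x))))"

definition defect_space_adj :: "('a::complex_inner \<Rightarrow> 'a) \<Rightarrow> 'a set" where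
  "defect_space_adj T = closure (range (op_sqrt (\<lambda>x. x - T (adj T x))))"

definition csubspace :: "'a::complex_vector set \<Rightarrow> bool" where
  "csubspace M \<longleftrightarrow> 0 \<in> M \<and> (\<forall>x\<in>M. \<forall>y\<in>M. x + y \<in> M) \<and> (\<forall>c. \<forall>x\<in>M. c *\<^sub>C x \<in> M)"

definition cspan :: "'a::complex_vector set \<Rightarrow> 'a set" where
  "cspan B = {x. \<exists>F c. finite F \<and> F \<subseteq> B \<and> x = (\<Sum>b\<in>F. c b *\<^sub>C b)}"

definition cfinite_dim :: "'a::complex_vector set \<Rightarrow> bool" where
  "cfinite_dim S \<longleftrightarrow> (\<exists>B. finite B \<and> S \<subseteq> cspan B)"

definition cdim :: "'a::complex_vector set \<Rightarrow> nat" where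
  "cdim S = (LEAST n. \<exists>B. finite B \<and> card B = n \<and> B \<subseteq> S \<and> cspan B = S)"

definition reducing :: "('a::complex_inner \<Rightarrow> 'a) \<Rightarrow> 'a set \<Rightarrow> bool" where
  "reducing T M \<longleftrightarrow> csubspace M \<and> closed M \<and> T ` M \<subseteq> M \<and> adj T ` M \<subseteq> M"

definition unitary_on :: "('a::complex_inner \<Rightarrow> 'a) \<Rightarrow> 'a set \<Rightarrow> bool" where
  "unitary_on T M \<longleftrightarrow> (\<forall>x\<in>M. norm (T x) = norm x) \<and> T ` M = M"

definition completely_non_unitary :: "('a::complex_inner \<Rightarrow> 'a) \<Rightarrow> bool" where
  "completely_non_unitary T \<longleftrightarrow> (\<forall>M. reducing T M \<and> unitary_on T M \<longrightarrow> M = {0})"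

definition hyponormal :: "('a::complex_inner \<Rightarrow> 'a) \<Rightarrow> bool" where
  "hyponormal T \<longleftrightarrow> op_le (\<lambda>x. T (adj T x)) (\<lambda>x. adj T (T x))"

end

theory Submission
  imports Defs
begin

interpretation cvs: vector_space "scaleC :: complex \<Rightarrow> 'a::complex_vector \<Rightarrow> 'a"
  by unfold_locales (simp_all add: scaleC_add_right scaleC_add_left scaleC_scaleC scaleC_one)

lemma scaleC_of_real: "complex_of_real r *\<^sub>C (x::'a::complex_vector) = r *\<^sub>R x"
  by (simp add: scaleR_scaleC)

lemma cinner_zero_left[simp]: "cinner 0 (y::'a::complex_inner) = 0"
  using cinner_add_left[of 0 0 y] by simp

lemma cinner_zero_right[simp]: "cinner (y::'a::complex_inner) 0 = 0"
  by (metis cinner_commute cinner_zero_left complex_cnj_zero)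

lemma cinner_add_right: "cinner (x::'a::complex_inner) (y + z) = cinner x y + cinner x z"
  by (metis cinner_add_left cinner_commute complex_cnj_add)

lemma cinner_scaleC_right: "cinner (x::'a::complex_inner) (c *\<^sub>C y) = c * cinner x y"
  by (metis cinner_commute cinner_scaleC_left complex_cnj_cnj complex_cnj_mult)

lemma cinner_minus_left: "cinner (- x) (y::'a::complex_inner) = - cinner x y"
  using cinner_add_left[of x "-x" y] add_eq_0_iff by (metis add.right_inverse cinner_zero_left)

lemma cinner_minus_right: "cinner (y::'a::complex_inner) (- x) = - cinner y x"
  using cinner_add_right[of y x "-x"] add_eq_0_iff by (metis add.right_inverse cinner_zero_right)

lemma cinner_diff_left: "cinner (x - z) (y::'a::complex_inner) = cinner x y - cinner z y"
  using cinner_add_left[of x "-z" y] cinner_minus_left[of z y] by simp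

lemma cinner_diff_right: "cinner (y::'a::complex_inner) (x - z) = cinner y x - cinner y z"
  using cinner_add_right[of y x "-z"] cinner_minus_right[of y z] by simp

lemma cinner_scaleR_left: "cinner (r *\<^sub>R x) (y::'a::complex_inner) = complex_of_real r * cinner x y"
  by (simp add: scaleR_scaleC cinner_scaleC_left)

lemma cinner_scaleR_right: "cinner (y::'a::complex_inner) (r *\<^sub>R x) = complex_of_real r * cinner y x"
  by (simp add: scaleR_scaleC cinner_scaleC_right)

lemmas cinner_simps = cinner_add_left cinner_add_right cinner_diff_left cinner_diff_right
  cinner_minus_left cinner_minus_right cinner_scaleC_left cinner_scaleC_right
  cinner_scaleR_left cinner_scaleR_right

lemma cinner_self: "cinner (x::'a::complex_inner) x = complex_of_real ((norm x)^2)"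
proof -
  have "Im (cinner x x) = 0" "Re (cinner x x) \<ge> 0" using cinner_nonneg by auto
  moreover have "(norm x)^2 = Re (cinner x x)" using norm_eq_sqrt_cinner[of x] \<open>Re (cinner x x) \<ge> 0\<close> by simp
  ultimately show ?thesis by (simp add: complex_eq_iff)
qed

lemma Re_cinner_self: "Re (cinner (x::'a::complex_inner) x) = (norm x)^2"
  by (simp add: cinner_self)

lemma norm_scaleC: "norm (c *\<^sub>C (x::'a::complex_inner)) = cmod c * norm x"
proof -
  have "(norm (c *\<^sub>C x))^2 = Re (cinner (c *\<^sub>C x) (c *\<^sub>C x))" by (simp add: Re_cinner_self)
  also have "\<dots> = Re (cnj c * c * cinner x x)" by (simp only: cinner_scaleC_left cinner_scaleC_right mult.assoc mult.left_commute)
  also have "cnj c * c * cinner x x = complex_of_real ((cmod c)^2 * (norm x)^2)"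
    using complex_norm_square[of c] by (simp add: cinner_self mult.commute[of "cnj c"])
  also have "Re \<dots> = (cmod c)^2 * (norm x)^2" by (simp only: Re_complex_of_real)
  finally have "(norm (c *\<^sub>C x))^2 = (cmod c * norm x)^2" by (simp add: power_mult_distrib)
  then show ?thesis by (simp add: power2_eq_iff_nonneg)
qed

lemma quad_aux:
  fixes a b k :: real
  assumes k: "k \<ge> 0" and b: "b \<ge> 0" and h: "\<And>r. 0 \<le> a - 2*r*k + r^2*k*b"
  shows "k \<le> a*b"
proof -
  have a: "a \<ge> 0" using h[of 0] by simp
  show ?thesis
  proof (cases "k = 0")
    case True then show ?thesis using a b by simp
  next
    case False
    then have kp: "k > 0" using k by simp
    show ?thesis
    proof (cases "b = 0")
      case True
      have "0 \<le> a - 2*((a+1)/(2*k))*k" using h[of "(a+1)/(2*k)"] True by simp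
      also have "\<dots> = -1" using kp by (simp add: field_simps)
      finally show ?thesis by simp
    next
      case False
      then have bp: "b > 0" using b by simp
      have "0 \<le> a - 2*(1/b)*k + (1/b)^2*k*b" using h[of "1/b"] by simp
      also have "\<dots> = a - k/b" using bp by (simp add: field_simps power2_eq_square)
      finally have "k/b \<le> a" by simp
      then show ?thesis using bp by (simp add: field_simps mult.commute)
    qed
  qed
qed

lemma lin_diff:
  fixes B :: "'a::ab_group_add \<Rightarrow> 'b::ab_group_add"
  assumes add: "\<And>x y. B (x+y) = B x + B y"
  shows "B (x - y) = B x - B y"
proof -
  have "B x = B (x - y) + B y" using add[of "x - y" y] by simp
  then show ?thesis by (simp add: algebra_simps)
qed

lemma form_expand:
  fixes B :: "'a::complex_inner \<Rightarrow> 'a"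
  assumes add: "\<And>x y. B (x+y) = B x + B y" and sc: "\<And>c x. B (c *\<^sub>C x) = c *\<^sub>C B x"
    and herm: "\<And>x y. cinner x (B y) = cnj (cinner y (B x))"
  shows "cinner (x - s *\<^sub>C y) (B (x - s *\<^sub>C y)) = cinner x (B x) - s * cinner x (B y)
     - cnj s * cnj (cinner x (B y)) + cnj s * s * cinner y (B y)"
proof -
  have e: "B (x - s *\<^sub>C y) = B x - s *\<^sub>C B y" by (simp add: lin_diff[OF add] sc)
  show ?thesis unfolding e using herm[of y x] by (simp add: cinner_simps algebra_simps)
qed

lemma form_expand_re:
  fixes B :: "'a::complex_inner \<Rightarrow> 'a"
  assumes add: "\<And>x y. B (x+y) = B x + B y" and sc: "\<And>c x. B (c *\<^sub>C x) = c *\<^sub>C B x"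
    and herm: "\<And>x y. cinner x (B y) = cnj (cinner y (B x))"
  shows "Re (cinner (x - (complex_of_real r * cnj (cinner x (B y))) *\<^sub>C y)
             (B (x - (complex_of_real r * cnj (cinner x (B y))) *\<^sub>C y)))
   = Re (cinner x (B x)) - 2*r*(cmod (cinner x (B y)))^2 + r^2*(cmod (cinner x (B y)))^2*Re (cinner y (B y))"
proof -
  define c where "c = cinner x (B y)"
  have cc: "c * cnj c = complex_of_real ((cmod c)^2)" using complex_norm_square[of c] by simp
  let ?s = "complex_of_real r * cnj c"
  have e: "cinner (x - ?s *\<^sub>C y) (B (x - ?s *\<^sub>C y)) = cinner x (B x)
       - complex_of_real (2*r*(cmod c)^2) + complex_of_real (r^2*(cmod c)^2) * cinner y (B y)"
  proof -
    have h1: "complex_of_real r * cnj c * c = complex_of_real (r * (cmod c)^2)"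
      by (metis cc mult.assoc mult.commute of_real_mult)
    have h2: "cnj (complex_of_real r * cnj c) * cnj c = complex_of_real (r * (cmod c)^2)"
      by (metis cc complex_cnj_cnj complex_cnj_complex_of_real complex_cnj_mult mult.assoc of_real_mult)
    have h3: "cnj (complex_of_real r * cnj c) * (complex_of_real r * cnj c) = complex_of_real (r^2 * (cmod c)^2)"
    proof -
      have "cnj (complex_of_real r * cnj c) * (complex_of_real r * cnj c)
         = complex_of_real r * complex_of_real r * (c * cnj c)" by (simp add: ac_simps)
      then show ?thesis unfolding cc by (simp add: power2_eq_square)
    qed
    show ?thesis unfolding form_expand[OF add sc herm] c_def[symmetric] h1 h2 h3
      by (simp add: algebra_simps)
  qed
  show ?thesis unfolding c_def[symmetric] e by simp
qed

lemma gen_cs: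
  fixes B :: "'a::complex_inner \<Rightarrow> 'a"
  assumes add: "\<And>x y. B (x+y) = B x + B y" and sc: "\<And>c x. B (c *\<^sub>C x) = c *\<^sub>C B x"
    and herm: "\<And>x y. cinner x (B y) = cnj (cinner y (B x))"
    and pos: "\<And>x. Re (cinner x (B x)) \<ge> 0"
  shows "(cmod (cinner x (B y)))^2 \<le> Re (cinner x (B x)) * Re (cinner y (B y))"
proof -
  have "0 \<le> Re (cinner x (B x)) - 2*r*(cmod (cinner x (B y)))^2 + r^2*(cmod (cinner x (B y)))^2*Re (cinner y (B y))" for r
    unfolding form_expand_re[OF add sc herm, symmetric] by (rule pos)
  from quad_aux[OF _ pos this] show ?thesis by (simp add: mult.commute)
qed

lemma cauchy_schwarz: "cmod (cinner x y) \<le> norm x * norm (y::'a::complex_inner)"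
proof -
  have "(cmod (cinner x (id y)))^2 \<le> Re (cinner x (id x)) * Re (cinner y (id y))"
  proof (rule gen_cs[where B=id])
    show "cinner a (id b) = cnj (cinner b (id a))" for a b by (simp only: id_apply) (rule cinner_commute)
    show "Re (cinner a (id a)) \<ge> 0" for a by (simp add: Re_cinner_self)
  qed simp_all
  then have "(cmod (cinner x y))^2 \<le> (norm x * norm y)^2" by (simp add: Re_cinner_self power_mult_distrib)
  then show ?thesis by (rule power2_le_imp_le) simp
qed

lemma cinner_ext: assumes "\<And>y. cinner a y = cinner b (y::'a::complex_inner)" shows "a = b"
proof -
  have "cinner (a - b) (a - b) = cinner a (a - b) - cinner b (a - b)" by (rule cinner_diff_left)
  also have "\<dots> = 0" using assms[of "a - b"] by (simp only: diff_self)
  finally have "a - b = 0" using cinner_eq_zero_iff by blast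
  then show ?thesis by simp
qed

lemma norm_add_sq: "(norm (x + y))^2 = (norm x)^2 + (norm y)^2 + 2 * Re (cinner x (y::'a::complex_inner))"
proof -
  have c: "Re (cinner y x) = Re (cinner x y)" by (subst cinner_commute) simp
  have "(norm (x + y))^2 = Re (cinner (x + y) (x + y))" by (rule Re_cinner_self[symmetric])
  also have "\<dots> = Re (cinner x x) + Re (cinner y y) + Re (cinner x y) + Re (cinner y x)"
    by (simp only: cinner_add_left cinner_add_right plus_complex.sel ac_simps)
  finally show ?thesis unfolding c Re_cinner_self by simp
qed

lemma norm_diff_sq: "(norm (x - y))^2 = (norm x)^2 + (norm y)^2 - 2 * Re (cinner x (y::'a::complex_inner))"
proof -
  have c: "Re (cinner y x) = Re (cinner x y)" by (subst cinner_commute) simp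
  have "(norm (x - y))^2 = Re (cinner (x - y) (x - y))" by (rule Re_cinner_self[symmetric])
  also have "\<dots> = Re (cinner x x) + Re (cinner y y) - Re (cinner x y) - Re (cinner y x)"
    by (simp only: cinner_diff_left cinner_diff_right minus_complex.sel)
  finally show ?thesis unfolding c Re_cinner_self by simp
qed

lemma bounded_linear_cinner_left: "bounded_linear (\<lambda>x. cinner x (y::'a::complex_inner))"
  apply (rule bounded_linear_intro[where K="norm y"])
    apply (simp add: cinner_simps)
   apply (simp add: cinner_simps scaleR_conv_of_real)
  by (rule cauchy_schwarz)

lemma bounded_linear_cinner_right: "bounded_linear (\<lambda>x. cinner (y::'a::complex_inner) x)"
  apply (rule bounded_linear_intro[where K="norm y"])
    apply (simp add: cinner_simps)
   apply (simp add: cinner_simps scaleR_conv_of_real)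
  by (metis cauchy_schwarz mult.commute)

lemma bounded_linear_scaleC: "bounded_linear (\<lambda>x. c *\<^sub>C (x::'a::complex_inner))"
  apply (rule bounded_linear_intro[where K="cmod c"])
    apply (simp add: scaleC_add_right)
   apply (simp add: scaleR_scaleC scaleC_scaleC mult.commute)
  by (simp add: norm_scaleC mult.commute)

lemma riesz:
  fixes f :: "'a::chilbert_space \<Rightarrow> complex"
  assumes add: "\<And>x y. f (x+y) = f x + f y" and sc: "\<And>c x. f (c *\<^sub>C x) = c * f x"
    and bd: "\<And>x. cmod (f x) \<le> K * norm x"
  shows "\<exists>z. \<forall>y. f y = cinner z y"
proof (cases "\<forall>y. f y = 0")
  case True then show ?thesis by (intro exI[of _ 0]) simp
next
  case False
  then obtain y0 where y0: "f y0 \<noteq> 0" by auto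
  have f0: "f 0 = 0" using add[of 0 0] by simp
  have fdiff: "f (x - y) = f x - f y" for x y by (rule lin_diff[OF add])
  have fR: "f (r *\<^sub>R x) = complex_of_real r * f x" for r x by (simp add: scaleR_scaleC sc)
  define H where "H = {x. f x = 1}"
  have x1: "(1 / f y0) *\<^sub>C y0 \<in> H" using y0 by (simp add: H_def sc)
  define d where "d = Inf (norm ` H)"
  have bdd: "bdd_below (norm ` H)" by (rule bdd_belowI[of _ 0]) auto
  have d_le: "d \<le> norm x" if "x \<in> H" for x unfolding d_def using bdd that by (simp add: cInf_lower)
  have d0: "d \<ge> 0" unfolding d_def using x1 by (intro cInf_greatest) auto
  have ex: "\<exists>x\<in>H. (norm x)^2 < d^2 + 1/Suc n" for n
  proof -
    have "d < sqrt (d^2 + 1/Suc n)" using d0 by (intro real_less_rsqrt) simp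
    then obtain x where x: "x \<in> H" "norm x < sqrt (d^2 + 1/Suc n)"
      using cInf_lessD[of "norm ` H"] x1 unfolding d_def by blast
    then have "(norm x)^2 < (sqrt (d^2 + 1/Suc n))^2" by (intro power_strict_mono) auto
    then show ?thesis using x by auto
  qed
  then obtain xs where xs: "\<And>n. xs n \<in> H" "\<And>n. (norm (xs n))^2 < d^2 + 1/Suc n" by metis
  have dist_bd: "(norm (xs m - xs n))^2 \<le> 2/Suc m + 2/Suc n" for m n
  proof -
    have "(1/2::real) *\<^sub>R (xs m + xs n) \<in> H" using xs(1)[of m] xs(1)[of n]
      by (simp add: H_def fR add)
    then have "d \<le> norm ((1/2::real) *\<^sub>R (xs m + xs n))" by (rule d_le)
    then have "2 * d \<le> norm (xs m + xs n)" by simp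
    then have "(2*d)^2 \<le> (norm (xs m + xs n))^2" using d0 by (intro power_mono) auto
    moreover have "(norm (xs m - xs n))^2 = 2*(norm (xs m))^2 + 2*(norm (xs n))^2 - (norm (xs m + xs n))^2"
      by (simp add: norm_add_sq norm_diff_sq)
    ultimately show ?thesis using xs(2)[of m] xs(2)[of n] by (simp add: power_mult_distrib)
  qed
  have "Cauchy xs"
  proof (rule metric_CauchyI)
    fix e :: real assume e: "e > 0"
    obtain M where M: "inverse (real (Suc M)) < e^2/4" using reals_Archimedean[of "e^2/4"] e by auto
    show "\<exists>M. \<forall>m\<ge>M. \<forall>n\<ge>M. dist (xs m) (xs n) < e"
    proof (intro exI allI impI)
      fix m n assume mn: "M \<le> m" "M \<le> n"
      have "2/Suc m \<le> 2/Suc M" "2/Suc n \<le> 2/Suc M" using mn by (auto intro!: divide_left_mono)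
      then have "2/Suc m + 2/Suc n \<le> 4 * inverse (real (Suc M))" by (simp add: inverse_eq_divide)
      also have "\<dots> < e^2" using M by simp
      finally have "(norm (xs m - xs n))^2 < e^2" using dist_bd[of m n] by linarith
      then have "norm (xs m - xs n) < e" using e by (simp add: power_less_imp_less_base)
      then show "dist (xs m) (xs n) < e" by (simp add: dist_norm)
    qed
  qed
  then obtain z where z: "xs \<longlonglongrightarrow> z" using Cauchy_convergent_iff convergent_def by blast
  have nz: "(\<lambda>n. norm (xs n - z)) \<longlonglongrightarrow> 0" using z by (intro tendsto_norm_zero LIM_zero)
  have fz: "f z = 1"
  proof -
    have "cmod (f z - 1) \<le> K * norm (xs n - z)" for n
    proof -
      have "f z - 1 = - f (xs n - z)" using xs(1)[of n] by (simp add: fdiff H_def)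
      then show ?thesis using bd[of "xs n - z"] by simp
    qed
    moreover have "(\<lambda>n. K * norm (xs n - z)) \<longlonglongrightarrow> 0" using tendsto_mult_right_zero[OF nz] by simp
    ultimately have "cmod (f z - 1) \<le> 0" by (intro LIMSEQ_le_const[of "\<lambda>n. K * norm (xs n - z)"]) auto
    then show ?thesis by simp
  qed
  then have zH: "z \<in> H" by (simp add: H_def)
  have "(norm z)^2 \<le> d^2"
  proof (rule LIMSEQ_le)
    show "(\<lambda>n. (norm (xs n))^2) \<longlonglongrightarrow> (norm z)^2" using z by (intro tendsto_intros)
    show "(\<lambda>n. d^2 + inverse (real (Suc n))) \<longlonglongrightarrow> d^2"
      using tendsto_add[OF tendsto_const LIMSEQ_inverse_real_of_nat, of "d^2"] by simp
    show "\<exists>N. \<forall>n\<ge>N. (norm (xs n))^2 \<le> d^2 + inverse (real (Suc n))"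
      using xs(2) by (auto simp: inverse_eq_divide intro: less_imp_le)
  qed
  then have zmin: "norm z \<le> d" using d0 by (rule power2_le_imp_le)
  have orth: "cinner z k = 0" if k: "f k = 0" for k
  proof -
    let ?c = "cinner z (id k)"
    have "0 \<le> Re (cinner z (id z)) - 2*r*(cmod ?c)^2 + r^2*(cmod ?c)^2*Re (cinner k (id k)) - (norm z)^2" for r
    proof -
      let ?w = "z - (complex_of_real r * cnj ?c) *\<^sub>C k"
      have "?w \<in> H" using fz k by (simp add: H_def fdiff sc)
      then have "norm z \<le> norm ?w" using zmin d_le by (meson order_trans)
      then have "(norm z)^2 \<le> (norm ?w)^2" by (intro power_mono) auto
      also have "(norm ?w)^2 = Re (cinner ?w (id ?w))" by (simp add: Re_cinner_self)
      also have "\<dots> = Re (cinner z (id z)) - 2*r*(cmod ?c)^2 + r^2*(cmod ?c)^2*Re (cinner k (id k))"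
      proof (rule form_expand_re[where B=id])
        show "cinner a (id b) = cnj (cinner b (id a))" for a b by (simp only: id_apply) (rule cinner_commute)
      qed simp_all
      finally show ?thesis by simp
    qed
    then have "0 \<le> 0 - 2*r*(cmod ?c)^2 + r^2*(cmod ?c)^2*Re (cinner k (id k))" for r
      by (simp add: Re_cinner_self)
    from quad_aux[OF _ _ this] have "(cmod ?c)^2 \<le> 0" by (simp add: Re_cinner_self)
    then show ?thesis by simp
  qed
  have z0: "z \<noteq> 0" using fz f0 by auto
  then have nz0: "norm z \<noteq> 0" by simp
  show ?thesis
  proof (intro exI allI)
    fix y
    have "f (y - f y *\<^sub>C z) = 0" using fz by (simp add: fdiff sc)
    then have "cinner z (y - f y *\<^sub>C z) = 0" by (rule orth)
    then have "cinner z y = f y * complex_of_real ((norm z)^2)" by (simp add: cinner_simps cinner_self)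
    then show "f y = cinner ((1 / (norm z)^2) *\<^sub>R z) y" using nz0
      by (simp add: cinner_scaleR_left field_simps)
  qed
qed

section \<open>Bounded complex-linear operators and adjoints\<close>

lemma bcl_bl: "bounded_clinear T \<Longrightarrow> bounded_linear T"
  by (simp add: bounded_clinear_def)

lemma bcl_add: "bounded_clinear T \<Longrightarrow> T (x + y) = T x + T y"
  by (simp add: bounded_clinear_def linear_add bounded_linear.linear)

lemma bcl_diff: "bounded_clinear T \<Longrightarrow> T (x - y) = T x - T y"
  by (simp add: bounded_clinear_def linear_diff bounded_linear.linear)

lemma bcl_zero: "bounded_clinear T \<Longrightarrow> T 0 = 0"
  by (simp add: bounded_clinear_def linear_0 bounded_linear.linear)

lemma bcl_scaleR: "bounded_clinear T \<Longrightarrow> T (r *\<^sub>R x) = r *\<^sub>R T x"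
  by (simp add: bounded_clinear_def linear_scale bounded_linear.linear)

lemma bcl_scaleC: "bounded_clinear T \<Longrightarrow> T (c *\<^sub>C x) = c *\<^sub>C T x"
  by (simp add: bounded_clinear_def)

lemma bcl_tendsto: "bounded_clinear T \<Longrightarrow> X \<longlonglongrightarrow> x \<Longrightarrow> (\<lambda>n. T (X n)) \<longlonglongrightarrow> T x"
  by (simp add: bounded_clinear_def bounded_linear.tendsto)

lemma bcl_bounded: "bounded_clinear T \<Longrightarrow> \<exists>K\<ge>0. \<forall>x. norm (T x) \<le> norm x * K"
  by (simp add: bounded_clinear_def bounded_linear.nonneg_bounded)

lemma bounded_clinearI:
  assumes "\<And>x y. f (x + y) = f x + f y" "\<And>c x. f (c *\<^sub>C x) = c *\<^sub>C f x" "\<And>x. norm (f x) \<le> norm x * K"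
  shows "bounded_clinear f"
  unfolding bounded_clinear_def
  using assms by (auto intro!: bounded_linear_intro[where K=K] simp: scaleR_scaleC)

lemma bcl_compose: "bounded_clinear S \<Longrightarrow> bounded_clinear T \<Longrightarrow> bounded_clinear (\<lambda>x. S (T x))"
  by (simp add: bounded_clinear_def bounded_linear_compose)

lemma bcl_id: "bounded_clinear (\<lambda>x. x)"
  by (simp add: bounded_clinear_def bounded_linear_ident)

lemma bcl_zero_fun: "bounded_clinear (\<lambda>x. 0)"
  by (simp add: bounded_clinear_def bounded_linear_zero cvs.scale_zero_right)

lemma bcl_minus: "bounded_clinear S \<Longrightarrow> bounded_clinear T \<Longrightarrow> bounded_clinear (\<lambda>x. S x - T x)"
  by (simp add: bounded_clinear_def bounded_linear_sub cvs.scale_right_diff_distrib)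

lemma bcl_plus: "bounded_clinear S \<Longrightarrow> bounded_clinear T \<Longrightarrow> bounded_clinear (\<lambda>x. S x + T x)"
  by (simp add: bounded_clinear_def bounded_linear_add scaleC_add_right)

lemma bcl_scaleR_fun: assumes "bounded_clinear S" shows "bounded_clinear (\<lambda>x. r *\<^sub>R S x)"
  unfolding bounded_clinear_def
proof
  show "bounded_linear (\<lambda>x. r *\<^sub>R S x)" by (rule bounded_linear_const_scaleR[OF bcl_bl[OF assms]])
  show "\<forall>c x. r *\<^sub>R S (c *\<^sub>C x) = c *\<^sub>C r *\<^sub>R S x"
    by (simp add: bcl_scaleC[OF assms] scaleR_scaleC mult.commute)
qed

lemma adj_exists:
  fixes T :: "'a::chilbert_space \<Rightarrow> 'a"
  assumes T: "bounded_clinear T"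
  shows "\<exists>S. \<forall>x y. cinner (S x) y = cinner x (T y)"
proof -
  obtain K where K: "\<And>x. norm (T x) \<le> norm x * K" using bcl_bounded[OF T] by blast
  have "\<exists>z. \<forall>y. cinner x (T y) = cinner z y" for x
  proof (rule riesz[where K="norm x * K"])
    show "cinner x (T (y + z)) = cinner x (T y) + cinner x (T z)" for y z
      by (simp add: bcl_add[OF T] cinner_simps)
    show "cinner x (T (c *\<^sub>C y)) = c * cinner x (T y)" for c y
      by (simp add: bcl_scaleC[OF T] cinner_simps)
    show "cmod (cinner x (T y)) \<le> norm x * K * norm y" for y
    proof -
      have "cmod (cinner x (T y)) \<le> norm x * norm (T y)" by (rule cauchy_schwarz)
      also have "\<dots> \<le> norm x * (norm y * K)" by (intro mult_left_mono K) simp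
      finally show ?thesis by (simp add: ac_simps)
    qed
  qed
  then obtain S where "\<And>x y. cinner x (T y) = cinner (S x) y" by metis
  then show ?thesis by metis
qed

lemma adj_prop:
  fixes T :: "'a::chilbert_space \<Rightarrow> 'a"
  assumes T: "bounded_clinear T"
  shows "cinner (adj T x) y = cinner x (T y)"
proof -
  have "\<exists>!S. \<forall>x y. cinner (S x) y = cinner x (T y)"
  proof (rule ex_ex1I)
    show "\<exists>S. \<forall>x y. cinner (S x) y = cinner x (T y)" by (rule adj_exists[OF T])
    fix S1 S2 assume "\<forall>x y. cinner (S1 x) y = cinner x (T y)" "\<forall>x y. cinner (S2 x) y = cinner x (T y)"
    then show "S1 = S2" by (intro ext cinner_ext) auto
  qed
  from theI'[OF this] show ?thesis unfolding adj_def by blast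
qed

lemma adj_prop2:
  fixes T :: "'a::chilbert_space \<Rightarrow> 'a"
  assumes T: "bounded_clinear T"
  shows "cinner y (adj T x) = cinner (T y) x"
  by (metis adj_prop[OF T] cinner_commute)

lemma adj_bcl:
  fixes T :: "'a::chilbert_space \<Rightarrow> 'a"
  assumes T: "bounded_clinear T" and K: "\<And>x. norm (T x) \<le> norm x * K" and K0: "K \<ge> 0"
  shows "bounded_clinear (adj T)" and "norm (adj T x) \<le> norm x * K"
proof -
  have nb: "norm (adj T x) \<le> norm x * K" for x
  proof -
    have "(norm (adj T x))^2 = Re (cinner (adj T x) (adj T x))" by (simp add: Re_cinner_self)
    also have "\<dots> = Re (cinner x (T (adj T x)))" by (simp add: adj_prop[OF T])
    also have "\<dots> \<le> cmod (cinner x (T (adj T x)))" by (rule complex_Re_le_cmod)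
    also have "\<dots> \<le> norm x * norm (T (adj T x))" by (rule cauchy_schwarz)
    also have "\<dots> \<le> norm x * (norm (adj T x) * K)" by (intro mult_left_mono K) simp
    finally have "norm (adj T x) * norm (adj T x) \<le> norm (adj T x) * (norm x * K)"
      by (simp add: power2_eq_square ac_simps)
    then show ?thesis
      by (cases "norm (adj T x) = 0") (use K0 in \<open>auto simp: mult_le_cancel_left\<close>)
  qed
  show "bounded_clinear (adj T)"
  proof (rule bounded_clinearI[where K=K])
    show "adj T (x + y) = adj T x + adj T y" for x y
      by (rule cinner_ext) (simp add: adj_prop[OF T] cinner_simps)
    show "adj T (c *\<^sub>C x) = c *\<^sub>C adj T x" for c x
      by (rule cinner_ext) (simp add: adj_prop[OF T] cinner_simps)
    show "norm (adj T x) \<le> norm x * K" for x by (rule nb)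
  qed
  show "norm (adj T x) \<le> norm x * K" by (rule nb)
qed

section \<open>Self-adjoint and positive operators\<close>

lemma sa_herm:
  assumes "\<And>x y. cinner x (S y) = cinner (S x) y"
  shows "cinner x (S y) = cnj (cinner y (S (x::'a::complex_inner)))"
  using assms by (metis cinner_commute)

lemma sa_real:
  assumes "\<And>x y. cinner x (S y) = cinner (S x) y"
  shows "Im (cinner x (S (x::'a::complex_inner))) = 0"
proof -
  have "cinner x (S x) = cnj (cinner x (S x))" using sa_herm[OF assms] by blast
  then show ?thesis by (metis Im_complex_of_real Reals_cnj_iff complex_is_Real_iff)
qed

lemma pos_sa:
  fixes S :: "'a::complex_inner \<Rightarrow> 'a"
  assumes P: "positive_op S"
  shows "cinner x (S y) = cinner (S x) y"
proof -
  have Sl: "bounded_clinear S" and q: "\<And>z. Im (cinner z (S z)) = 0" using P by (auto simp: positive_op_def)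
  have Sa: "S (a + b) = S a + S b" for a b by (rule bcl_add[OF Sl])
  have Sc: "S (c *\<^sub>C a) = c *\<^sub>C S a" for c a by (rule bcl_scaleC[OF Sl])
  define \<alpha> where "\<alpha> = cinner x (S y)"
  define \<beta> where "\<beta> = cinner y (S x)"
  have "cinner (x + y) (S (x + y)) = cinner x (S x) + cinner y (S y) + \<alpha> + \<beta>"
    unfolding \<alpha>_def \<beta>_def Sa by (simp add: cinner_add_left cinner_add_right)
  then have h1: "Im \<alpha> + Im \<beta> = 0" using q[of "x+y"] q[of x] q[of y] by simp
  have "cinner (x + \<i> *\<^sub>C y) (S (x + \<i> *\<^sub>C y)) = cinner x (S x) + cinner y (S y) + \<i> * \<alpha> - \<i> * \<beta>"
    unfolding \<alpha>_def \<beta>_def Sa Sc by (simp add: cinner_add_left cinner_add_right cinner_scaleC_left cinner_scaleC_right algebra_simps)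
  then have h2: "Re \<alpha> - Re \<beta> = 0" using q[of "x + \<i> *\<^sub>C y"] q[of x] q[of y] by simp
  have "cinner (S x) y = cnj \<beta>" unfolding \<beta>_def by (rule cinner_commute)
  then show ?thesis using h1 h2 unfolding \<alpha>_def[symmetric] by (simp add: complex_eq_iff)
qed

lemma pos_zero:
  fixes S :: "'a::complex_inner \<Rightarrow> 'a"
  assumes P: "positive_op S" and z: "Re (cinner y (S y)) = 0"
  shows "S y = 0"
proof -
  have Sl: "bounded_clinear S" and q: "\<And>z. Re (cinner z (S z)) \<ge> 0" using P by (auto simp: positive_op_def)
  have "(cmod (cinner (S y) (S y)))^2 \<le> Re (cinner (S y) (S (S y))) * Re (cinner y (S y))"
  proof (rule gen_cs[where B=S])
    show "cinner a (S b) = cnj (cinner b (S a))" for a b by (rule sa_herm[OF pos_sa[OF P]])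
  qed (auto simp: bcl_add[OF Sl] bcl_scaleC[OF Sl] q)
  then have "cinner (S y) (S y) = 0" using z by simp
  then show ?thesis using cinner_eq_zero_iff by blast
qed

lemma sqrt_unique_aux:
  fixes S S' :: "'a::complex_inner \<Rightarrow> 'a"
  assumes P: "positive_op S" and P': "positive_op S'"
    and comm: "\<And>x. S (S' x) = S' (S x)" and sq: "\<And>x. S (S x) = S' (S' x)"
  shows "S = S'"
proof
  fix x
  have Sl: "bounded_clinear S" and q: "\<And>z. Re (cinner z (S z)) \<ge> 0" using P by (auto simp: positive_op_def)
  have Sl': "bounded_clinear S'" and q': "\<And>z. Re (cinner z (S' z)) \<ge> 0" using P' by (auto simp: positive_op_def)
  define y where "y = S x - S' x"
  have "S y + S' y = 0" unfolding y_def bcl_diff[OF Sl] bcl_diff[OF Sl'] using comm[of x] sq[of x] by simp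
  then have "cinner y (S y + S' y) = 0" by simp
  then have "cinner y (S y) + cinner y (S' y) = 0" by (simp only: cinner_add_right)
  then have "Re (cinner y (S y) + cinner y (S' y)) = 0" by simp
  then have "Re (cinner y (S y)) + Re (cinner y (S' y)) = 0" by (simp only: plus_complex.sel)
  then have "Re (cinner y (S y)) = 0" "Re (cinner y (S' y)) = 0" using q[of y] q'[of y] by linarith+
  then have z: "S y = 0" "S' y = 0" using pos_zero[OF P] pos_zero[OF P'] by blast+
  have "cinner y y = cinner y (S x) - cinner y (S' x)" unfolding y_def[of] by (simp add: y_def cinner_diff_right)
  also have "\<dots> = cinner (S y) x - cinner (S' y) x" using pos_sa[OF P, of y x] pos_sa[OF P', of y x] by simp
  also have "\<dots> = 0" using z by simp
  finally have "y = 0" using cinner_eq_zero_iff by blast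
  then show "S x = S' x" unfolding y_def by simp
qed

lemma cauchy_from_bound:
  fixes X :: "nat \<Rightarrow> 'a::real_normed_vector" and a :: "nat \<Rightarrow> real"
  assumes a: "Cauchy a" and K: "K > 0"
    and bd: "\<And>m n. n \<le> m \<Longrightarrow> (dist (X m) (X n))^4 \<le> K * dist (a m) (a n)"
  shows "Cauchy X"
proof (rule metric_CauchyI)
  fix e :: real assume e: "e > 0"
  then have "e^4 / K > 0" using K by simp
  then obtain M where M: "\<forall>m\<ge>M. \<forall>n\<ge>M. dist (a m) (a n) < e^4 / K"
    using a unfolding Cauchy_def by blast
  have bd': "(dist (X m) (X n))^4 \<le> K * dist (a m) (a n)" for m n
  proof (cases "n \<le> m")
    case True then show ?thesis by (rule bd)
  next
    case False
    then have "(dist (X n) (X m))^4 \<le> K * dist (a n) (a m)" by (intro bd) simp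
    then show ?thesis by (metis dist_commute)
  qed
  show "\<exists>M. \<forall>m\<ge>M. \<forall>n\<ge>M. dist (X m) (X n) < e"
  proof (intro exI allI impI)
    fix m n assume "M \<le> m" "M \<le> n"
    then have "dist (a m) (a n) < e^4 / K" using M by blast
    then have "dist (a m) (a n) * K < e^4" using K by (simp add: pos_less_divide_eq)
    then have "(dist (X m) (X n))^4 < e^4" using bd'[of m n] by (simp add: mult.commute)
    then show "dist (X m) (X n) < e" by (rule power_less_imp_less_base) (use e in simp)
  qed
qed

section \<open>Square root of I - B for a positive contraction B\<close>

context
  fixes B :: "'a::chilbert_space \<Rightarrow> 'a"
  assumes Bl: "bounded_clinear B"
    and Bsa: "\<And>x y. cinner x (B y) = cinner (B x) y"
    and Bpos: "\<And>x. Re (cinner x (B x)) \<ge> 0"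
    and Bnorm: "\<And>x. norm (B x) \<le> norm x"
begin

lemma pow_bcl: "bounded_clinear (B ^^ k)"
proof (induction k)
  case 0 then show ?case using bcl_id by (simp add: id_def)
next
  case (Suc k)
  have "bounded_clinear (\<lambda>x. B ((B ^^ k) x))" by (rule bcl_compose[OF Bl Suc])
  then show ?case by (simp add: comp_def)
qed

lemma pow_sa: "cinner x ((B ^^ k) y) = cinner ((B ^^ k) x) y"
proof (induction k arbitrary: x y)
  case 0 then show ?case by simp
next
  case (Suc k)
  have "cinner x ((B ^^ Suc k) y) = cinner x (B ((B ^^ k) y))" by simp
  also have "\<dots> = cinner (B x) ((B ^^ k) y)" by (rule Bsa)
  also have "\<dots> = cinner ((B ^^ k) (B x)) y" by (rule Suc)
  also have "(B ^^ k) (B x) = (B ^^ Suc k) x" by (simp add: funpow_swap1)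
  finally show ?case .
qed

lemma pow_pos: "Re (cinner x ((B ^^ k) x)) \<ge> 0"
proof (cases "even k")
  case True
  then obtain j where k: "k = j + j" by (metis evenE mult_2)
  have "cinner x ((B ^^ k) x) = cinner x ((B ^^ j) ((B ^^ j) x))" by (simp add: k funpow_add)
  also have "\<dots> = cinner ((B ^^ j) x) ((B ^^ j) x)" by (rule pow_sa)
  finally show ?thesis by (simp add: Re_cinner_self)
next
  case False
  then obtain j where k: "k = Suc (j + j)" by (metis oddE mult_2 Suc_eq_plus1)
  have "cinner x ((B ^^ k) x) = cinner x ((B ^^ j) (B ((B ^^ j) x)))"
    by (simp add: k funpow_add funpow_swap1)
  also have "\<dots> = cinner ((B ^^ j) x) (B ((B ^^ j) x))" by (rule pow_sa)
  finally show ?thesis using Bpos by simp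
qed

lemma pow_comm:
  assumes C: "bounded_clinear C" and cb: "\<And>x. C (B x) = B (C x)"
  shows "C ((B ^^ k) x) = (B ^^ k) (C x)"
  by (induction k) (simp_all add: cb)

inductive_set polys :: "('a \<Rightarrow> 'a) set" where
  pz: "(\<lambda>x. 0) \<in> polys"
| ps: "X \<in> polys \<Longrightarrow> c \<ge> 0 \<Longrightarrow> (\<lambda>x. X x + c *\<^sub>R (B ^^ k) x) \<in> polys"

lemma polys_bcl: "X \<in> polys \<Longrightarrow> bounded_clinear X"
proof (induction rule: polys.induct)
  case pz then show ?case by (rule bcl_zero_fun)
next
  case (ps X c k)
  show ?case by (rule bcl_plus[OF ps.IH bcl_scaleR_fun[OF pow_bcl]])
qed

lemma polys_sa: "X \<in> polys \<Longrightarrow> cinner x (X y) = cinner (X x) y"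
proof (induction arbitrary: x y rule: polys.induct)
  case pz then show ?case by simp
next
  case (ps X c k)
  show ?case by (simp add: cinner_add_left cinner_add_right cinner_scaleR_left cinner_scaleR_right ps.IH pow_sa)
qed

lemma polys_pos: "X \<in> polys \<Longrightarrow> Re (cinner x (X x)) \<ge> 0"
proof (induction rule: polys.induct)
  case pz then show ?case by simp
next
  case (ps X c k)
  have "Re (cinner x (X x + c *\<^sub>R (B ^^ k) x)) = Re (cinner x (X x)) + c * Re (cinner x ((B ^^ k) x))"
    by (simp add: cinner_add_right cinner_scaleR_right)
  moreover have "c * Re (cinner x ((B ^^ k) x)) \<ge> 0" using ps.hyps pow_pos by simp
  ultimately show ?case using ps.IH by simp
qed

lemma polys_posop: assumes a: "X \<in> polys" shows "positive_op X"
proof -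
  have "Im (cinner x (X x)) = 0" for x by (rule sa_real) (rule polys_sa[OF a])
  then show ?thesis unfolding positive_op_def using polys_bcl[OF a] polys_pos[OF a] by blast
qed

lemma polys_comm:
  assumes "X \<in> polys" and C: "bounded_clinear C" and cb: "\<And>x. C (B x) = B (C x)"
  shows "C (X x) = X (C x)"
  using assms(1)
proof (induction rule: polys.induct)
  case pz then show ?case by (simp add: bcl_zero[OF C])
next
  case (ps X c k)
  show ?case by (simp add: bcl_add[OF C] bcl_scaleR[OF C] ps.IH pow_comm[OF C cb])
qed

lemma polys_add: assumes XP: "X \<in> polys" and YP: "Y \<in> polys" shows "(\<lambda>x. X x + Y x) \<in> polys"
  using YP
proof (induction Y rule: polys.induct)
  case pz then show ?case using XP by simp
next
  case (ps Y c k)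
  have "(\<lambda>x. (X x + Y x) + c *\<^sub>R (B ^^ k) x) \<in> polys" by (rule polys.ps[OF ps.IH ps.hyps(2)])
  then show ?case by (simp add: add.assoc)
qed

lemma polys_scale: "X \<in> polys \<Longrightarrow> r \<ge> 0 \<Longrightarrow> (\<lambda>x. r *\<^sub>R X x) \<in> polys"
proof (induction X rule: polys.induct)
  case pz then show ?case using polys.pz by simp
next
  case (ps X c k)
  have "(\<lambda>x. r *\<^sub>R X x + (r * c) *\<^sub>R (B ^^ k) x) \<in> polys"
    by (rule polys.ps[OF ps.IH[OF ps.prems]]) (use ps.hyps ps.prems in simp)
  then show ?case by (simp add: scaleR_add_right)
qed

lemma polys_powcomp: "X \<in> polys \<Longrightarrow> (\<lambda>x. X ((B ^^ j) x)) \<in> polys"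
proof (induction X rule: polys.induct)
  case pz then show ?case using polys.pz by simp
next
  case (ps X c k)
  have "(\<lambda>x. X ((B ^^ j) x) + c *\<^sub>R (B ^^ (k + j)) x) \<in> polys"
    by (rule polys.ps[OF ps.IH ps.hyps(2)])
  then show ?case by (simp add: funpow_add)
qed

lemma polys_comp: assumes XP: "X \<in> polys" and YP: "Y \<in> polys" shows "(\<lambda>x. X (Y x)) \<in> polys"
  using YP
proof (induction Y rule: polys.induct)
  case pz then show ?case using polys.pz by (simp add: bcl_zero[OF polys_bcl[OF XP]])
next
  case (ps Y c k)
  have "(\<lambda>x. X (Y x) + c *\<^sub>R X ((B ^^ k) x)) \<in> polys"
    by (rule polys_add[OF ps.IH polys_scale[OF polys_powcomp[OF XP] ps.hyps(2)]])
  then show ?case by (simp add: bcl_add[OF polys_bcl[OF XP]] bcl_scaleR[OF polys_bcl[OF XP]])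
qed

lemma B_polys: "B \<in> polys"
proof -
  have "(\<lambda>x. 0 + 1 *\<^sub>R (B ^^ 1) x) \<in> polys" by (rule polys.ps[OF polys.pz]) simp
  then show ?thesis by simp
qed

primrec Yseq :: "nat \<Rightarrow> 'a \<Rightarrow> 'a" where
  "Yseq 0 = (\<lambda>x. 0)"
| "Yseq (Suc n) = (\<lambda>x. (1/2::real) *\<^sub>R (B x + Yseq n (Yseq n x)))"

lemma Y_polys: "Yseq n \<in> polys"
proof (induction n)
  case 0 then show ?case using polys.pz by simp
next
  case (Suc n)
  have "(\<lambda>x. (1/2::real) *\<^sub>R B x + (1/2::real) *\<^sub>R Yseq n (Yseq n x)) \<in> polys"
    by (rule polys_add[OF polys_scale[OF B_polys] polys_scale[OF polys_comp[OF Suc Suc]]]) simp_all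
  then show ?case by (simp add: scaleR_add_right)
qed

lemma Y_bcl: "bounded_clinear (Yseq n)" by (rule polys_bcl[OF Y_polys])

lemma Y_comm: "bounded_clinear C \<Longrightarrow> (\<And>x. C (B x) = B (C x)) \<Longrightarrow> C (Yseq n x) = Yseq n (C x)"
  by (rule polys_comm[OF Y_polys])

lemma Y_diff: "(\<lambda>x. Yseq (Suc n) x - Yseq n x) \<in> polys"
proof (induction n)
  case 0
  have "(\<lambda>x. (1/2::real) *\<^sub>R B x) \<in> polys" by (rule polys_scale[OF B_polys]) simp
  then show ?case by simp
next
  case (Suc n)
  let ?Y1 = "Yseq (Suc n)" and ?Y0 = "Yseq n"
  have cB: "B (Yseq m x) = Yseq m (B x)" for m x by (rule Y_comm[OF Bl]) simp
  have c: "?Y1 (?Y0 x) = ?Y0 (?Y1 x)" for x by (rule Y_comm[OF Y_bcl]) (rule cB[symmetric])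
  have "(\<lambda>x. (1/2::real) *\<^sub>R ((\<lambda>x. ?Y1 x - ?Y0 x) ((\<lambda>x. ?Y1 x + ?Y0 x) x))) \<in> polys"
    by (rule polys_scale[OF polys_comp[OF Suc polys_add[OF Y_polys Y_polys]]]) simp
  moreover have "(\<lambda>x. (1/2::real) *\<^sub>R ((\<lambda>x. ?Y1 x - ?Y0 x) ((\<lambda>x. ?Y1 x + ?Y0 x) x)))
      = (\<lambda>x. Yseq (Suc (Suc n)) x - Yseq (Suc n) x)"
  proof
    fix x
    have h: "?Y1 (?Y1 x + ?Y0 x) - ?Y0 (?Y1 x + ?Y0 x) = ?Y1 (?Y1 x) - ?Y0 (?Y0 x)"
      by (simp del: Yseq.simps add: bcl_add[OF Y_bcl] c algebra_simps)
    have key: "(1/2::real) *\<^sub>R (B x + p) - (1/2::real) *\<^sub>R (B x + q) = (1/2::real) *\<^sub>R (p - q)" for p q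
      by (simp add: algebra_simps)
    have "Yseq (Suc (Suc n)) x - Yseq (Suc n) x
       = (1/2::real) *\<^sub>R (B x + ?Y1 (?Y1 x)) - (1/2::real) *\<^sub>R (B x + ?Y0 (?Y0 x))"
      by simp
    also have "\<dots> = (1/2::real) *\<^sub>R (?Y1 (?Y1 x) - ?Y0 (?Y0 x))" by (rule key)
    also have "\<dots> = (1/2::real) *\<^sub>R ((\<lambda>x. ?Y1 x - ?Y0 x) ((\<lambda>x. ?Y1 x + ?Y0 x) x))"
      by (simp only: h)
    finally show "(1/2::real) *\<^sub>R ((\<lambda>x. ?Y1 x - ?Y0 x) ((\<lambda>x. ?Y1 x + ?Y0 x) x))
      = Yseq (Suc (Suc n)) x - Yseq (Suc n) x" by (rule sym)
  qed
  ultimately show ?case by simp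
qed

lemma Y_mono: "n \<le> m \<Longrightarrow> (\<lambda>x. Yseq m x - Yseq n x) \<in> polys"
proof (induction m rule: dec_induct)
  case base then show ?case using polys.pz by simp
next
  case (step m)
  have "(\<lambda>x. (Yseq (Suc m) x - Yseq m x) + (Yseq m x - Yseq n x)) \<in> polys"
    by (rule polys_add[OF Y_diff step.IH])
  then show ?case by simp
qed

lemma Y_norm: "norm (Yseq n x) \<le> norm x"
proof (induction n arbitrary: x)
  case 0 then show ?case by simp
next
  case (Suc n)
  have "norm (Yseq (Suc n) x) = (1/2) * norm (B x + Yseq n (Yseq n x))" by simp
  also have "\<dots> \<le> (1/2) * (norm (B x) + norm (Yseq n (Yseq n x)))"
    by (intro mult_left_mono norm_triangle_ineq) simp
  also have "\<dots> \<le> (1/2) * (norm x + norm x)"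
    using Bnorm[of x] Suc[of "Yseq n x"] Suc[of x] by (intro mult_left_mono add_mono) simp_all
  finally show ?case by simp
qed

lemma Y_sa: "cinner x (Yseq n y) = cinner (Yseq n x) y" by (rule polys_sa[OF Y_polys])

lemma a_mono: "n \<le> m \<Longrightarrow> Re (cinner x (Yseq n x)) \<le> Re (cinner x (Yseq m x))"
  using polys_pos[OF Y_mono, of n m x] by (simp add: cinner_diff_right)

lemma a_bound: "Re (cinner x (Yseq n x)) \<le> (norm x)^2"
proof -
  have "Re (cinner x (Yseq n x)) \<le> cmod (cinner x (Yseq n x))" by (rule complex_Re_le_cmod)
  also have "\<dots> \<le> norm x * norm (Yseq n x)" by (rule cauchy_schwarz)
  also have "\<dots> \<le> norm x * norm x" by (intro mult_left_mono Y_norm) simp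
  finally show ?thesis by (simp add: power2_eq_square)
qed

lemma Y_cauchy: "Cauchy (\<lambda>n. Yseq n x)"
proof -
  define a where "a n = Re (cinner x (Yseq n x))" for n
  have "incseq a" unfolding a_def by (intro monoI a_mono)
  moreover have "bdd_above (range a)" unfolding a_def using a_bound by (intro bdd_aboveI) auto
  ultimately have "a \<longlonglongrightarrow> (SUP i. a i)" by (intro LIMSEQ_incseq_SUP)
  then have ca: "Cauchy a" by (rule LIMSEQ_imp_Cauchy)
  define K where "K = 8 * (norm x)^2 + 1"
  show ?thesis
  proof (rule cauchy_from_bound[OF ca])
    show "K > 0" unfolding K_def by (simp add: add_nonneg_pos)
    fix m n :: nat assume nm: "n \<le> m"
    define C where "C = (\<lambda>z. Yseq m z - Yseq n z)"
    have CP: "C \<in> polys" unfolding C_def by (rule Y_mono[OF nm])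
    have Cl: "bounded_clinear C" by (rule polys_bcl[OF CP])
    have Cn: "norm (C z) \<le> 2 * norm z" for z
    proof -
      have "norm (C z) \<le> norm (Yseq m z) + norm (Yseq n z)" unfolding C_def by (rule norm_triangle_ineq4)
      also have "\<dots> \<le> norm z + norm z" by (intro add_mono Y_norm)
      finally show ?thesis by simp
    qed
    define w where "w = C x"
    have "(cmod (cinner w (C x)))^2 \<le> Re (cinner w (C w)) * Re (cinner x (C x))"
    proof (rule gen_cs[where B=C])
      show "cinner a (C b) = cnj (cinner b (C a))" for a b by (rule sa_herm[OF polys_sa[OF CP]])
    qed (auto simp: bcl_add[OF Cl] bcl_scaleC[OF Cl] polys_pos[OF CP])
    moreover have "cmod (cinner w (C x)) = (norm w)^2" unfolding w_def by (simp only: cinner_self norm_of_real) simp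
    ultimately have h1: "(norm w)^4 \<le> Re (cinner w (C w)) * Re (cinner x (C x))"
      by (simp add: power_mult[symmetric])
    have "Re (cinner w (C w)) \<le> cmod (cinner w (C w))" by (rule complex_Re_le_cmod)
    also have "\<dots> \<le> norm w * norm (C w)" by (rule cauchy_schwarz)
    also have "\<dots> \<le> (2 * norm x) * (2 * (2 * norm x))"
      using Cn[of x] Cn[of w] unfolding w_def by (intro mult_mono) auto
    also have "\<dots> \<le> K" unfolding K_def by (simp add: power2_eq_square)
    finally have h2: "Re (cinner w (C w)) \<le> K" .
    have h3: "Re (cinner x (C x)) = a m - a n" unfolding C_def a_def by (simp add: cinner_diff_right)
    have h4: "a m - a n \<le> dist (a m) (a n)" by (simp add: dist_real_def)
    have h5: "0 \<le> Re (cinner w (C w))" "0 \<le> Re (cinner x (C x))" using polys_pos[OF CP] by auto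
    have "Re (cinner w (C w)) * Re (cinner x (C x)) \<le> K * dist (a m) (a n)"
    proof (rule mult_mono)
      show "Re (cinner x (C x)) \<le> dist (a m) (a n)" using h3 h4 by simp
      show "0 \<le> K" unfolding K_def by simp
    qed (use h2 h5 in auto)
    then have "(norm w)^4 \<le> K * dist (a m) (a n)" using h1 by linarith
    then show "(dist (Yseq m x) (Yseq n x))^4 \<le> K * dist (a m) (a n)"
      unfolding w_def C_def by (simp add: dist_norm)
  qed
qed

definition Ylim :: "'a \<Rightarrow> 'a" where "Ylim x = lim (\<lambda>n. Yseq n x)"

lemma Y_tends: "(\<lambda>n. Yseq n x) \<longlonglongrightarrow> Ylim x"
  unfolding Ylim_def using Y_cauchy Cauchy_convergent_iff convergent_LIMSEQ_iff by blast

lemma Ylim_add: "Ylim (x + y) = Ylim x + Ylim y"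
proof -
  have "(\<lambda>n. Yseq n x + Yseq n y) \<longlonglongrightarrow> Ylim x + Ylim y" by (intro tendsto_add Y_tends)
  then have "(\<lambda>n. Yseq n (x + y)) \<longlonglongrightarrow> Ylim x + Ylim y" by (simp only: bcl_add[OF Y_bcl])
  then show ?thesis by (rule LIMSEQ_unique[OF Y_tends])
qed

lemma Ylim_scaleC: "Ylim (c *\<^sub>C x) = c *\<^sub>C Ylim x"
proof -
  have "(\<lambda>n. c *\<^sub>C Yseq n x) \<longlonglongrightarrow> c *\<^sub>C Ylim x"
    by (rule bounded_linear.tendsto[OF bounded_linear_scaleC Y_tends])
  then have "(\<lambda>n. Yseq n (c *\<^sub>C x)) \<longlonglongrightarrow> c *\<^sub>C Ylim x" by (simp only: bcl_scaleC[OF Y_bcl])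
  then show ?thesis by (rule LIMSEQ_unique[OF Y_tends])
qed

lemma Ylim_norm: "norm (Ylim x) \<le> norm x"
  by (rule LIMSEQ_le_const2[OF tendsto_norm[OF Y_tends]]) (simp add: Y_norm)

lemma Ylim_bcl: "bounded_clinear Ylim"
  by (rule bounded_clinearI[where K=1]) (simp_all add: Ylim_add Ylim_scaleC Ylim_norm)

lemma Ylim_sa: "cinner x (Ylim y) = cinner (Ylim x) y"
proof -
  have "(\<lambda>n. cinner x (Yseq n y)) \<longlonglongrightarrow> cinner x (Ylim y)"
    by (rule bounded_linear.tendsto[OF bounded_linear_cinner_right Y_tends])
  moreover have "(\<lambda>n. cinner x (Yseq n y)) \<longlonglongrightarrow> cinner (Ylim x) y"
    unfolding Y_sa by (rule bounded_linear.tendsto[OF bounded_linear_cinner_left Y_tends])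
  ultimately show ?thesis by (rule LIMSEQ_unique)
qed

lemma Ylim_fix: "Ylim x = (1/2::real) *\<^sub>R (B x + Ylim (Ylim x))"
proof -
  have t1: "(\<lambda>n. Yseq n (Ylim x)) \<longlonglongrightarrow> Ylim (Ylim x)" by (rule Y_tends)
  have "(\<lambda>n. Yseq n (Yseq n x) - Yseq n (Ylim x)) \<longlonglongrightarrow> 0"
  proof (rule Lim_null_comparison)
    show "\<forall>\<^sub>F n in sequentially. norm (Yseq n (Yseq n x) - Yseq n (Ylim x)) \<le> norm (Yseq n x - Ylim x)"
      by (intro always_eventually allI) (simp add: bcl_diff[OF Y_bcl, symmetric] Y_norm)
    show "(\<lambda>n. norm (Yseq n x - Ylim x)) \<longlonglongrightarrow> 0" by (intro tendsto_norm_zero LIM_zero Y_tends)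
  qed
  from Lim_transform[OF t1 this] have t2: "(\<lambda>n. Yseq n (Yseq n x)) \<longlonglongrightarrow> Ylim (Ylim x)" .
  have "(\<lambda>n. (1/2::real) *\<^sub>R (B x + Yseq n (Yseq n x))) \<longlonglongrightarrow> (1/2::real) *\<^sub>R (B x + Ylim (Ylim x))"
    by (intro tendsto_intros t2)
  then have "(\<lambda>n. Yseq (Suc n) x) \<longlonglongrightarrow> (1/2::real) *\<^sub>R (B x + Ylim (Ylim x))" by simp
  moreover have "(\<lambda>n. Yseq (Suc n) x) \<longlonglongrightarrow> Ylim x" by (rule LIMSEQ_Suc[OF Y_tends])
  ultimately show ?thesis using LIMSEQ_unique by metis
qed

lemma Ylim_comm:
  assumes C: "bounded_clinear C" and cb: "\<And>x. C (B x) = B (C x)"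
  shows "C (Ylim x) = Ylim (C x)"
proof -
  have "(\<lambda>n. C (Yseq n x)) \<longlonglongrightarrow> C (Ylim x)" by (rule bcl_tendsto[OF C Y_tends])
  then have "(\<lambda>n. Yseq n (C x)) \<longlonglongrightarrow> C (Ylim x)" by (simp only: Y_comm[OF C cb])
  from LIMSEQ_unique[OF Y_tends this] show ?thesis by simp
qed

lemma Sq_pos: "positive_op (\<lambda>x. x - Ylim x)"
  unfolding positive_op_def
proof (intro conjI allI)
  show "bounded_clinear (\<lambda>x. x - Ylim x)" by (rule bcl_minus[OF bcl_id Ylim_bcl])
  fix x
  have "Re (cinner x (Ylim x)) \<le> cmod (cinner x (Ylim x))" by (rule complex_Re_le_cmod)
  also have "\<dots> \<le> norm x * norm (Ylim x)" by (rule cauchy_schwarz)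
  also have "\<dots> \<le> norm x * norm x" by (intro mult_left_mono Ylim_norm) simp
  finally have "Re (cinner x (Ylim x)) \<le> (norm x)^2" by (simp add: power2_eq_square)
  then show "Re (cinner x (x - Ylim x)) \<ge> 0" by (simp add: cinner_diff_right Re_cinner_self)
  have "Im (cinner x (Ylim x)) = 0" by (rule sa_real) (rule Ylim_sa)
  then show "Im (cinner x (x - Ylim x)) = 0" by (simp add: cinner_diff_right cinner_self)
qed

lemma Sq_sq: "(\<lambda>x. x - Ylim x) \<circ> (\<lambda>x. x - Ylim x) = (\<lambda>x. x - B x)"
proof
  fix x
  have "2 *\<^sub>R Ylim x = 2 *\<^sub>R ((1/2::real) *\<^sub>R (B x + Ylim (Ylim x)))" using Ylim_fix[of x] by simp
  also have "\<dots> = B x + Ylim (Ylim x)" by simp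
  finally have e: "2 *\<^sub>R Ylim x = B x + Ylim (Ylim x)" .
  have f: "Ylim (Ylim x) = 2 *\<^sub>R Ylim x - B x" by (simp add: e)
  show "((\<lambda>x. x - Ylim x) \<circ> (\<lambda>x. x - Ylim x)) x = x - B x"
    by (simp add: bcl_diff[OF Ylim_bcl] f scaleR_2 algebra_simps)
qed

lemma sqrt_ex1: "\<exists>!S. positive_op S \<and> S \<circ> S = (\<lambda>x. x - B x)"
proof (rule ex1I[where a="\<lambda>x. x - Ylim x"])
  show "positive_op (\<lambda>x. x - Ylim x) \<and> (\<lambda>x. x - Ylim x) \<circ> (\<lambda>x. x - Ylim x) = (\<lambda>x. x - B x)"
    using Sq_pos Sq_sq by blast
  fix S' assume a: "positive_op S' \<and> S' \<circ> S' = (\<lambda>x. x - B x)"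
  then have P': "positive_op S'" and h: "\<And>z. S' (S' z) = z - B z"
    by (auto dest: fun_cong simp: comp_def)
  have S'l: "bounded_clinear S'" using P' by (simp add: positive_op_def)
  have cb: "S' (B x) = B (S' x)" for x
  proof -
    have "S' (S' (S' x)) = S' x - B (S' x)" by (rule h)
    moreover have "S' (S' (S' x)) = S' x - S' (B x)" by (simp add: h bcl_diff[OF S'l])
    ultimately show ?thesis by simp
  qed
  have comm: "S' (x - Ylim x) = S' x - Ylim (S' x)" for x
    by (simp add: bcl_diff[OF S'l] Ylim_comm[OF S'l cb])
  have sq: "S' (S' x) = (x - Ylim x) - Ylim (x - Ylim x)" for x
    using fun_cong[OF Sq_sq, of x] h[of x] by simp
  show "S' = (\<lambda>x. x - Ylim x)"
    by (rule sqrt_unique_aux[OF P' Sq_pos]) (simp_all add: comm sq)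
qed

lemma op_sqrt_props: "positive_op (op_sqrt (\<lambda>x. x - B x)) \<and> op_sqrt (\<lambda>x. x - B x) \<circ> op_sqrt (\<lambda>x. x - B x) = (\<lambda>x. x - B x)"
  unfolding op_sqrt_def by (rule theI'[OF sqrt_ex1])

end

lemma main_ineq:
  fixes T Ts :: "'a::complex_inner \<Rightarrow> 'a"
  assumes Tl: "bounded_clinear T" and Tsl: "bounded_clinear Ts"
    and adj: "\<And>x y. cinner (Ts x) y = cinner x (T y)"
    and u: "norm u = 1" and a0: "a \<ge> 0"
    and F1: "\<And>x. x - Ts (T x) = a *\<^sub>R (cinner u x *\<^sub>C u)"
    and F2: "\<And>p. p - T (Ts p) = 0 \<Longrightarrow> cinner u p = 0"
  shows "(norm (Ts x))^2 \<le> (norm (T x))^2"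
proof -
  have adj2: "cinner y (Ts z) = cinner (T y) z" for y z by (metis adj cinner_commute)
  have uu: "cinner u u = 1" using u by (simp add: cinner_self)
  define v where "v = T u"
  define \<xi> where "\<xi> = cinner v x"
  define Z where "Z = (cmod \<xi>)^2"
  define Q where "Q = (\<lambda>z. T (Ts z))"
  define E where "E = (\<lambda>z. z - Q z)"
  have Ql: "Q (y - z) = Q y - Q z" "Q (c *\<^sub>C y) = c *\<^sub>C Q y" "Q (r *\<^sub>R y) = r *\<^sub>R Q y" for y z c r
    unfolding Q_def by (simp_all add: bcl_diff[OF Tl] bcl_diff[OF Tsl] bcl_scaleC[OF Tl] bcl_scaleC[OF Tsl]
        bcl_scaleR[OF Tl] bcl_scaleR[OF Tsl])
  have xi2: "\<xi> * cnj \<xi> = complex_of_real Z" unfolding Z_def using complex_norm_square[of \<xi>] by simp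
  have Z0: "Z \<ge> 0" unfolding Z_def by simp
  have s1: "Ts v = (1 - a) *\<^sub>R u"
  proof -
    have "u - Ts v = a *\<^sub>R u" using F1[of u] unfolding v_def uu by simp
    then show ?thesis by (simp add: algebra_simps)
  qed
  have s2: "(norm v)^2 = 1 - a"
  proof -
    have "(norm v)^2 = Re (cinner (T u) v)" unfolding v_def by (simp add: Re_cinner_self)
    also have "\<dots> = Re (cinner u (Ts v))" by (simp add: adj2)
    also have "\<dots> = 1 - a" unfolding s1 by (simp add: cinner_scaleR_right uu)
    finally show ?thesis .
  qed
  have s3: "Q v = (1 - a) *\<^sub>R v" unfolding Q_def s1 by (simp add: bcl_scaleR[OF Tl] v_def)
  have s4: "cinner u (Ts x) = \<xi>" unfolding \<xi>_def v_def by (rule adj2)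
  have s5: "Q (Q x) = Q x - a *\<^sub>R (\<xi> *\<^sub>C v)"
  proof -
    have "Ts (T (Ts x)) = Ts x - a *\<^sub>R (\<xi> *\<^sub>C u)" using F1[of "Ts x"] unfolding s4 by (simp add: algebra_simps)
    then show ?thesis unfolding Q_def v_def
      by (simp add: bcl_diff[OF Tl] bcl_scaleR[OF Tl] bcl_scaleC[OF Tl])
  qed
  have Qsa: "cinner (Q y) z = cinner y (Q z)" for y z
    unfolding Q_def by (simp add: adj2[symmetric] adj)
  have Esa: "cinner (E y) z = cinner y (E z)" for y z
    unfolding E_def by (simp add: cinner_diff_left cinner_diff_right Qsa)
  have Ev: "E v = a *\<^sub>R v" unfolding E_def s3 by (simp add: algebra_simps)
  define p where "p = Q x - \<xi> *\<^sub>C v"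
  have "E p = 0"
  proof -
    have "E p = (Q x - \<xi> *\<^sub>C v) - (Q (Q x) - \<xi> *\<^sub>C Q v)" unfolding E_def p_def by (simp add: Ql)
    also have "\<dots> = 0" unfolding s5 s3 by (simp add: algebra_simps scaleR_scaleC scaleC_scaleC)
    finally show ?thesis .
  qed
  then have up: "cinner u p = 0" by (intro F2) (simp add: E_def Q_def)
  define r where "r = E x + \<xi> *\<^sub>C v"
  have xrp: "x = r + p" unfolding r_def p_def E_def by simp
  have ux: "cinner u x = cinner u r" using up unfolding xrp by (simp add: cinner_add_right)
  define e where "e = Re (cinner x (E x))"
  have e_eq: "e = (norm x)^2 - (norm (Ts x))^2"
  proof -
    have "cinner x (Q x) = cinner (Ts x) (Ts x)" unfolding Q_def by (simp add: adj)
    then show ?thesis unfolding e_def E_def by (simp add: cinner_diff_right Re_cinner_self)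
  qed
  have s7: "(norm (E x))^2 = e - a * Z"
  proof -
    have EEx: "E (E x) = E x - a *\<^sub>R (\<xi> *\<^sub>C v)" unfolding E_def by (simp add: Ql s5)
    have "(norm (E x))^2 = Re (cinner (E x) (E x))" by (simp add: Re_cinner_self)
    also have "\<dots> = Re (cinner x (E (E x)))" by (simp add: Esa)
    also have "\<dots> = e - a * Re (\<xi> * cinner x v)"
      unfolding EEx e_def by (simp add: cinner_diff_right cinner_scaleR_right cinner_scaleC_right)
    also have "cinner x v = cnj \<xi>" unfolding \<xi>_def by (rule cinner_commute)
    finally show ?thesis using xi2 by simp
  qed
  have s8: "cinner v (E x) = complex_of_real a * \<xi>"
    unfolding Esa[symmetric] Ev \<xi>_def by (simp add: cinner_scaleR_left)
  have s9: "a * Z \<le> (1 - a) * e"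
  proof -
    have "cmod (cinner v (E x)) \<le> norm v * norm (E x)" by (rule cauchy_schwarz)
    then have "(cmod (cinner v (E x)))^2 \<le> (norm v * norm (E x))^2" by (intro power_mono) auto
    then have "a^2 * Z \<le> (1 - a) * (e - a * Z)"
      unfolding s8 power_mult_distrib s2 s7 Z_def using a0 by (simp add: norm_mult power_mult_distrib)
    then show ?thesis by (simp add: algebra_simps power2_eq_square)
  qed
  have s10: "(norm r)^2 = e + Z"
  proof -
    have "cinner (E x) v = complex_of_real a * cnj \<xi>" using s8 by (metis cinner_commute complex_cnj_complex_of_real complex_cnj_mult)
    then have "cinner (E x) (\<xi> *\<^sub>C v) = \<xi> * (complex_of_real a * cnj \<xi>)"
      by (simp only: cinner_scaleC_right)
    also have "\<dots> = complex_of_real a * (\<xi> * cnj \<xi>)" by (simp only: mult.left_commute)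
    also have "\<dots> = complex_of_real (a * Z)" unfolding xi2 by simp
    finally have "Re (cinner (E x) (\<xi> *\<^sub>C v)) = a * Z" by simp
    moreover have "(norm (\<xi> *\<^sub>C v))^2 = Z * (1 - a)" unfolding norm_scaleC power_mult_distrib s2 Z_def ..
    ultimately show ?thesis unfolding r_def norm_add_sq s7 by (simp add: algebra_simps)
  qed
  have s11: "(cmod (cinner u x))^2 \<le> e + Z"
  proof -
    have "cmod (cinner u r) \<le> norm u * norm r" by (rule cauchy_schwarz)
    then have "(cmod (cinner u r))^2 \<le> (norm r)^2" using u by (intro power_mono) auto
    then show ?thesis unfolding ux s10 .
  qed
  have s12: "(norm x)^2 - (norm (T x))^2 = a * (cmod (cinner u x))^2"
  proof -
    have "cinner x (Ts (T x)) = cinner (T x) (T x)" by (rule adj2)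
    then have "Re (cinner x (x - Ts (T x))) = (norm x)^2 - (norm (T x))^2"
      by (simp add: cinner_diff_right Re_cinner_self)
    moreover have "cinner x (x - Ts (T x)) = complex_of_real a * (cinner u x * cnj (cinner u x))"
      unfolding F1 by (simp add: cinner_scaleR_right cinner_scaleC_right cinner_commute[of x u])
    moreover have "cinner u x * cnj (cinner u x) = complex_of_real ((cmod (cinner u x))^2)"
      using complex_norm_square[of "cinner u x"] by simp
    ultimately show ?thesis by simp
  qed
  have "a * (cmod (cinner u x))^2 \<le> a * (e + Z)" by (rule mult_left_mono[OF s11 a0])
  moreover have "a * (e + Z) = a * e + a * Z" "(1 - a) * e = e - a * e" by (simp_all add: algebra_simps)
  ultimately show ?thesis using s9 s12 e_eq by linarith
qed

section \<open>Subspaces and spans\<close>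

lemma cspan_eq: "cspan B = cvs.span B"
proof (intro set_eqI iffI)
  fix x assume "x \<in> cspan B"
  then obtain F c where F: "finite F" "F \<subseteq> B" "x = (\<Sum>b\<in>F. c b *\<^sub>C b)" unfolding cspan_def by blast
  then show "x \<in> cvs.span B" unfolding cvs.span_explicit by blast
next
  fix x assume "x \<in> cvs.span B"
  then obtain F c where F: "finite F" "F \<subseteq> B" "x = (\<Sum>b\<in>F. c b *\<^sub>C b)" unfolding cvs.span_explicit by blast
  then show "x \<in> cspan B" unfolding cspan_def by blast
qed

lemma closure_csubspace:
  fixes S :: "'a::complex_inner set"
  assumes S: "cvs.subspace S"
  shows "cvs.subspace (closure S)"
  unfolding cvs.subspace_def
proof (intro conjI ballI allI)
  show "0 \<in> closure S" using S closure_subset unfolding cvs.subspace_def by blast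
  fix x y assume x: "x \<in> closure S" and y: "y \<in> closure S"
  obtain f where f: "\<And>n. f n \<in> S" "f \<longlonglongrightarrow> x" using x unfolding closure_sequential by blast
  obtain g where g: "\<And>n. g n \<in> S" "g \<longlonglongrightarrow> y" using y unfolding closure_sequential by blast
  have "(\<lambda>n. f n + g n) \<longlonglongrightarrow> x + y" by (intro tendsto_add f g)
  moreover have "f n + g n \<in> S" for n using f g S unfolding cvs.subspace_def by blast
  ultimately show "x + y \<in> closure S" unfolding closure_sequential by (intro exI[of _ "\<lambda>n. f n + g n"]) auto
next
  fix c and x :: 'a assume x: "x \<in> closure S"
  obtain f where f: "\<And>n. f n \<in> S" "f \<longlonglongrightarrow> x" using x unfolding closure_sequential by blast
  have "(\<lambda>n. c *\<^sub>C f n) \<longlonglongrightarrow> c *\<^sub>C x" by (rule bounded_linear.tendsto[OF bounded_linear_scaleC f(2)])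
  moreover have "c *\<^sub>C f n \<in> S" for n using f S unfolding cvs.subspace_def by blast
  ultimately show "c *\<^sub>C x \<in> closure S" unfolding closure_sequential by (intro exI[of _ "\<lambda>n. c *\<^sub>C f n"]) auto
qed

lemma range_csubspace:
  assumes R: "bounded_clinear R"
  shows "cvs.subspace (range R)"
  unfolding cvs.subspace_def
proof (intro conjI ballI allI)
  show "0 \<in> range R" using bcl_zero[OF R] by (metis rangeI)
  fix x y assume "x \<in> range R" "y \<in> range R"
  then show "x + y \<in> range R" by (auto simp: bcl_add[OF R, symmetric])
next
  fix c x assume "x \<in> range R"
  then show "c *\<^sub>C x \<in> range R" by (auto simp: bcl_scaleC[OF R, symmetric])
qed

theorem corollary3p7:
  fixes T :: "'h::chilbert_space \<Rightarrow> 'h"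
  assumes "contraction T"
    and "completely_non_unitary T"
    and "cfinite_dim (defect_space T)"
    and "cfinite_dim (defect_space_adj T)"
    and "defect_space T \<subseteq> defect_space_adj T"
    and "cdim (defect_space T) = 1"
  shows "hyponormal T"
proof -
  have Tl: "bounded_clinear T" and Tn: "\<And>x. norm (T x) \<le> norm x"
    using assms(1) by (auto simp: contraction_def)
  define Ts where "Ts = adj T"
  have Tsl: "bounded_clinear Ts" unfolding Ts_def by (rule adj_bcl(1)[OF Tl, where K=1]) (simp_all add: Tn)
  have Tsn: "norm (Ts x) \<le> norm x" for x unfolding Ts_def using adj_bcl(2)[OF Tl, where K=1] Tn by simp
  have adj: "cinner (Ts x) y = cinner x (T y)" for x y unfolding Ts_def by (rule adj_prop[OF Tl])
  have adj2: "cinner y (Ts z) = cinner (T y) z" for y z unfolding Ts_def by (rule adj_prop2[OF Tl])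
  have sq1: "positive_op (op_sqrt (\<lambda>x. x - Ts (T x))) \<and>
      op_sqrt (\<lambda>x. x - Ts (T x)) \<circ> op_sqrt (\<lambda>x. x - Ts (T x)) = (\<lambda>x. x - Ts (T x))"
  proof (rule op_sqrt_props)
    show "bounded_clinear (\<lambda>x. Ts (T x))" by (rule bcl_compose[OF Tsl Tl])
    show "cinner x (Ts (T y)) = cinner (Ts (T x)) y" for x y by (simp add: adj adj2)
    show "Re (cinner x (Ts (T x))) \<ge> 0" for x by (simp add: adj2 Re_cinner_self)
    show "norm (Ts (T x)) \<le> norm x" for x using Tsn[of "T x"] Tn[of x] by linarith
  qed
  have sq2: "positive_op (op_sqrt (\<lambda>x. x - T (Ts x))) \<and>
      op_sqrt (\<lambda>x. x - T (Ts x)) \<circ> op_sqrt (\<lambda>x. x - T (Ts x)) = (\<lambda>x. x - T (Ts x))"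
  proof (rule op_sqrt_props)
    show "bounded_clinear (\<lambda>x. T (Ts x))" by (rule bcl_compose[OF Tl Tsl])
    show "cinner x (T (Ts y)) = cinner (T (Ts x)) y" for x y by (simp add: adj[symmetric] adj2[symmetric])
    show "Re (cinner x (T (Ts x))) \<ge> 0" for x by (simp add: adj[symmetric] Re_cinner_self)
    show "norm (T (Ts x)) \<le> norm x" for x using Tsn[of x] Tn[of "Ts x"] by linarith
  qed
  define R where "R = op_sqrt (\<lambda>x. x - Ts (T x))"
  define R2 where "R2 = op_sqrt (\<lambda>x. x - T (Ts x))"
  have RP: "positive_op R" and RR: "\<And>x. R (R x) = x - Ts (T x)"
    using sq1 unfolding R_def by (auto dest: fun_cong simp: comp_def)
  have R2P: "positive_op R2" and R2R2: "\<And>x. R2 (R2 x) = x - T (Ts x)"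
    using sq2 unfolding R2_def by (auto dest: fun_cong simp: comp_def)
  have Rl: "bounded_clinear R" using RP by (simp add: positive_op_def)
  define V where "V = closure (range R)"
  have V_def': "defect_space T = V" unfolding V_def R_def Ts_def defect_space_def ..
  have V2: "defect_space_adj T = closure (range R2)" unfolding R2_def Ts_def defect_space_adj_def ..
  have Vsub: "cvs.subspace V" unfolding V_def by (intro closure_csubspace range_csubspace Rl)
  define P where "P n \<longleftrightarrow> (\<exists>B. finite B \<and> card B = n \<and> B \<subseteq> V \<and> cspan B = V)" for n
  have exP: "\<exists>n. P n"
  proof -
    obtain B0 where B0: "finite B0" "V \<subseteq> cspan B0" using assms(3) unfolding cfinite_dim_def V_def' by blast
    obtain Bb where Bb: "Bb \<subseteq> V" "cvs.independent Bb" "V \<subseteq> cvs.span Bb"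
      by (rule cvs.maximal_independent_subset)
    have "finite Bb"
      using cvs.independent_span_bound[OF B0(1) Bb(2)] Bb(1) B0(2) unfolding cspan_eq by blast
    moreover have "cspan Bb = V" unfolding cspan_eq by (rule cvs.span_subspace[OF Bb(1) Bb(3) Vsub])
    ultimately show ?thesis unfolding P_def using Bb(1) by blast
  qed
  have cd: "(LEAST n. P n) = 1" using assms(6) unfolding cdim_def V_def' P_def .
  have "P 1" using LeastI_ex[OF exP] cd by simp
  then obtain Bs where Bs: "finite Bs" "card Bs = 1" "Bs \<subseteq> V" "cspan Bs = V" unfolding P_def by blast
  obtain b where bB: "Bs = {b}" using card_1_singletonE[OF Bs(2)] by blast
  have Vb: "V = range (\<lambda>c. c *\<^sub>C b)" using Bs(4) unfolding bB cspan_eq cvs.span_singleton by simp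
  have "\<not> P 0"
  proof
    assume "P 0"
    then have "(LEAST n. P n) \<le> 0" by (rule Least_le)
    then show False using cd by simp
  qed
  then have "cspan {} \<noteq> V" unfolding P_def by auto
  then have "V \<noteq> {0}" unfolding cspan_eq by simp
  then have b0: "b \<noteq> 0" using Vb by auto
  \<comment> \<open>the defect operator is rank one\<close>
  have Rx: "R x \<in> range (\<lambda>c. c *\<^sub>C b)" for x
  proof -
    have "R x \<in> closure (range R)" by (rule subsetD[OF closure_subset rangeI])
    then show ?thesis using Vb unfolding V_def by simp
  qed
  define g where "g x = (SOME c. R x = c *\<^sub>C b)" for x
  have g: "R x = g x *\<^sub>C b" for x
  proof -
    obtain c where "R x = c *\<^sub>C b" using Rx[of x] by (rule imageE) (rule that, assumption)
    then show ?thesis unfolding g_def by (rule someI)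
  qed
  define h where "h x = g x * g b" for x
  have Dh: "x - Ts (T x) = h x *\<^sub>C b" for x
  proof -
    have "x - Ts (T x) = R (g x *\<^sub>C b)" using RR[of x] g[of x] by simp
    also have "\<dots> = (g x * g b) *\<^sub>C b" by (simp add: bcl_scaleC[OF Rl] g[of b] scaleC_scaleC)
    finally show ?thesis unfolding h_def .
  qed
  have Dsa: "cinner y (x - Ts (T x)) = cinner (y - Ts (T y)) x" for x y
    by (simp add: cinner_diff_left cinner_diff_right adj adj2)
  define \<beta> where "\<beta> = (norm b)^2"
  have \<beta>0: "\<beta> > 0" unfolding \<beta>_def using b0 by simp
  have bb: "cinner b b = complex_of_real \<beta>" unfolding \<beta>_def by (rule cinner_self)
  have hb1: "cinner b (b - Ts (T b)) = h b * complex_of_real \<beta>"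
    unfolding Dh by (simp add: cinner_scaleC_right bb)
  have "Im (cinner b (b - Ts (T b))) = 0" by (rule sa_real) (rule Dsa)
  then have "Im (h b) * \<beta> = 0" unfolding hb1 by simp
  then have hbIm: "Im (h b) = 0" using \<beta>0 by simp
  have "Re (cinner b (b - Ts (T b))) = (norm b)^2 - (norm (T b))^2"
    by (simp add: cinner_diff_right adj2 Re_cinner_self)
  also have "\<dots> \<ge> 0" using Tn[of b] by (simp add: power_mono)
  finally have "Re (h b) * \<beta> \<ge> 0" unfolding hb1 by simp
  then have hbRe: "Re (h b) \<ge> 0" using \<beta>0 by (simp add: zero_le_mult_iff)
  define \<kappa> where "\<kappa> = Re (h b)"
  have hb: "h b = complex_of_real \<kappa>" unfolding \<kappa>_def using hbIm by (simp add: complex_eq_iff)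
  have hx: "h x = complex_of_real \<kappa> * cinner b x / complex_of_real \<beta>" for x
  proof -
    have "cinner b (x - Ts (T x)) = h x * complex_of_real \<beta>" unfolding Dh by (simp add: cinner_scaleC_right bb)
    moreover have "cinner b (x - Ts (T x)) = complex_of_real \<kappa> * cinner b x"
    proof -
      have "cinner b (x - Ts (T x)) = cinner (b - Ts (T b)) x" by (rule Dsa)
      also have "\<dots> = cinner (h b *\<^sub>C b) x" by (simp only: Dh)
      also have "\<dots> = complex_of_real \<kappa> * cinner b x" by (simp add: cinner_scaleC_left hb)
      finally show ?thesis .
    qed
    ultimately show ?thesis using \<beta>0 by (simp add: field_simps)
  qed
  define u where "u = (1 / norm b) *\<^sub>R b"
  have un: "norm u = 1" unfolding u_def using b0 by simp
  have F1: "x - Ts (T x) = \<kappa> *\<^sub>R (cinner u x *\<^sub>C u)" for x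
  proof -
    have u1: "cinner u x = complex_of_real (1 / norm b) * cinner b x" by (simp only: u_def cinner_scaleR_left)
    have u2: "u = complex_of_real (1 / norm b) *\<^sub>C b" by (simp only: u_def scaleR_scaleC)
    have "cinner u x *\<^sub>C u = (complex_of_real (1 / norm b) * cinner b x * complex_of_real (1 / norm b)) *\<^sub>C b"
      unfolding u1 by (subst u2) (rule scaleC_scaleC)
    also have "complex_of_real (1 / norm b) * cinner b x * complex_of_real (1 / norm b) = cinner b x / complex_of_real \<beta>"
      unfolding \<beta>_def using b0 by (simp add: field_simps power2_eq_square)
    finally have "\<kappa> *\<^sub>R (cinner u x *\<^sub>C u) = (complex_of_real \<kappa> * (cinner b x / complex_of_real \<beta>)) *\<^sub>C b"
      by (simp add: scaleR_scaleC scaleC_scaleC)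
    also have "\<dots> = x - Ts (T x)" unfolding Dh hx by simp
    finally show ?thesis by simp
  qed
  have uV: "u \<in> V" unfolding Vb u_def scaleR_scaleC by blast
  then have uV2: "u \<in> closure (range R2)" using assms(5) unfolding V_def' V2 by blast
  have F2: "cinner u p = 0" if p: "p - T (Ts p) = 0" for p
  proof -
    have "cinner (R2 p) (R2 p) = cinner p (R2 (R2 p))" by (rule pos_sa[OF R2P, symmetric])
    also have "\<dots> = 0" using p R2R2[of p] by simp
    finally have R2p: "R2 p = 0" using cinner_eq_zero_iff by blast
    have "range R2 \<subseteq> {z. cinner z p = 0}"
    proof
      fix z assume "z \<in> range R2"
      then obtain y where "z = R2 y" by blast
      then show "z \<in> {z. cinner z p = 0}" using pos_sa[OF R2P, of y p] R2p by simp
    qed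
    moreover have "closed {z. cinner z p = 0}"
      by (intro closed_Collect_eq continuous_on_const
            bounded_linear.continuous_on[OF bounded_linear_cinner_left continuous_on_id])
    ultimately have "closure (range R2) \<subseteq> {z. cinner z p = 0}" by (rule closure_minimal)
    then show ?thesis using uV2 by blast
  qed
  have main: "(norm (Ts x))^2 \<le> (norm (T x))^2" for x
    by (rule main_ineq[OF Tl Tsl adj un hbRe[folded \<kappa>_def] F1 F2])
  show ?thesis
    unfolding hyponormal_def op_le_def positive_op_def Ts_def[symmetric]
  proof (intro conjI allI)
    show "bounded_clinear (\<lambda>x. Ts (T x) - T (Ts x))"
      by (rule bcl_minus[OF bcl_compose[OF Tsl Tl] bcl_compose[OF Tl Tsl]])
    fix x
    have e: "cinner x (Ts (T x) - T (Ts x)) = complex_of_real ((norm (T x))^2 - (norm (Ts x))^2)"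
      by (simp add: cinner_diff_right adj2 adj[symmetric] cinner_self)
    show "Im (cinner x (Ts (T x) - T (Ts x))) = 0" unfolding e by simp
    show "Re (cinner x (Ts (T x) - T (Ts x))) \<ge> 0" unfolding e using main[of x] by simp
  qed
qed

end
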